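(* Let $\mathcal{M}=[0,S)\times_h\mathbb{S}^{N-1}$ be a model manifold, let $R_0\in(0,S)$, $f\in C^0([R_0,S))$, $\varphi\in C^1((R_0,S))$, $\kappa\in C^0((R_0,S))$, and for $r\in(R_0,S)$, $c\in\mathbb{R}$ let $$w(r,c)=\frac{1}{h(r)^{N-1}\int_{R_0}^r\frac{ds}{h(s)^{N-1}}}\left(c-\int_{R_0}^r\int_s^r\Big(\frac{h(t)}{h(s)}\Big)^{N-1}f(t)\,dt\,ds\right).$$ Suppose that $\varphi'(r)-w(r,\varphi(r))\ge0$ for all $r\in(R_0,S)$, and that $$h(r_2)^{N-1}\kappa(r_2)-h(r_1)^{N-1}\kappa(r_1)+\int_{r_1}^{r_2}h(t)^{N-1}f(t)\,dt\le0$$ for all $r_1,r_2\in(R_0,S)$ with $r_1<r_2$. Then for every $r_0\in(R_0,S)$ with $w(r_0,\varphi(r_0))-\kappa(r_0)=0$ we have $w(r,\varphi(r))-\kappa(r)\le0$ for all $r\in(R_0,r_0]$.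
   Context: Model manifold data: $N\ge2$, $S\in(0,+\infty]$, $h\in C^\infty([0,S))$ with $h>0$ on $(0,S)$, $h'(0)=1$, $h^{(2k)}(0)=0$ for all $k\ge0$. *)

theory Defs
  imports "HOL-Analysis.Analysis"
begin

definition domS :: "ereal \<Rightarrow> real set" where
  "domS S = {r. 0 \<le> r \<and> ereal r < S}"

text \<open>h is C-infinity on [0,S) (one-sided derivatives at 0): there is a sequence D of
  functions with D 0 = h on [0,S) and D (Suc k) the derivative of D k within [0,S).\<close>
definition smooth_on_domS :: "ereal \<Rightarrow> (real \<Rightarrow> real) \<Rightarrow> (nat \<Rightarrow> real \<Rightarrow> real) \<Rightarrow> bool" where
  "smooth_on_domS S h D \<longleftrightarrow>
     (\<forall>x\<in>domS S. D 0 x = h x) \<and>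
     (\<forall>k. \<forall>x\<in>domS S. (D k has_real_derivative D (Suc k) x) (at x within domS S))"

definition model_data :: "nat \<Rightarrow> ereal \<Rightarrow> (real \<Rightarrow> real) \<Rightarrow> bool" where
  "model_data N S h \<longleftrightarrow> N \<ge> 2 \<and> S > 0 \<and>
     (\<exists>D. smooth_on_domS S h D \<and> D 1 0 = 1 \<and> (\<forall>k. D (2 * k) 0 = 0)) \<and>
     (\<forall>r. 0 < r \<and> ereal r < S \<longrightarrow> h r > 0)"

definition model_w :: "nat \<Rightarrow> (real \<Rightarrow> real) \<Rightarrow> (real \<Rightarrow> real) \<Rightarrow> real \<Rightarrow> real \<Rightarrow> real \<Rightarrow> real" where
  "model_w N h f R0 r c =
     (c - integral {R0..r} (\<lambda>s. integral {s..r} (\<lambda>t. (h t / h s) ^ (N - 1) * f t)))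
     / (h r ^ (N - 1) * integral {R0..r} (\<lambda>s. 1 / h s ^ (N - 1)))"

end

theory Submission
  imports Defs
begin

lemma deriv_int:
  assumes "continuous_on {a..b} g" "a < x" "x < b"
  shows "((\<lambda>u. integral {a..u} g) has_real_derivative g x) (at x)"
  using integral_has_real_derivative[of a b g x] assms by (simp add: at_within_Icc_at)

theorem proposition3p4:
  fixes N :: nat and S :: ereal and h f \<phi> \<phi>' \<kappa> :: "real \<Rightarrow> real" and R0 :: real
  assumes model: "model_data N S h"
    and R0: "0 < R0" "ereal R0 < S"
    and f_cont: "continuous_on {r. R0 \<le> r \<and> ereal r < S} f"
    and \<phi>_deriv: "\<And>r. R0 < r \<Longrightarrow> ereal r < S \<Longrightarrow> (\<phi> has_real_derivative \<phi>' r) (at r)"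
    and \<phi>'_cont: "continuous_on {r. R0 < r \<and> ereal r < S} \<phi>'"
    and \<kappa>_cont: "continuous_on {r. R0 < r \<and> ereal r < S} \<kappa>"
    and sub: "\<And>r. R0 < r \<Longrightarrow> ereal r < S \<Longrightarrow> \<phi>' r - model_w N h f R0 r (\<phi> r) \<ge> 0"
    and flux: "\<And>r1 r2. R0 < r1 \<Longrightarrow> r1 < r2 \<Longrightarrow> ereal r2 < S \<Longrightarrow>
        h r2 ^ (N - 1) * \<kappa> r2 - h r1 ^ (N - 1) * \<kappa> r1
        + integral {r1..r2} (\<lambda>t. h t ^ (N - 1) * f t) \<le> 0"
  shows "\<forall>r0. R0 < r0 \<and> ereal r0 < S \<and> model_w N h f R0 r0 (\<phi> r0) - \<kappa> r0 = 0 \<longrightarrow>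
           (\<forall>r. R0 < r \<and> r \<le> r0 \<longrightarrow> model_w N h f R0 r (\<phi> r) - \<kappa> r \<le> 0)"
proof -
  define U where "U = {r. R0 \<le> r \<and> ereal r < S}"
  define n where "n = N - 1"
  define H where "H t = h t ^ n" for t
  define F where "F r = integral {R0..r} (\<lambda>t. H t * f t)" for r
  define V where "V r = integral {R0..r} (\<lambda>s. 1 / H s)" for r
  define J where "J r = integral {R0..r} (\<lambda>s. F s / H s)" for r
  define I where "I r = integral {R0..r} (\<lambda>s. integral {s..r} (\<lambda>t. (h t / h s) ^ (N - 1) * f t))" for r
  define u where "u r = model_w N h f R0 r (\<phi> r)" for r
  obtain D where sm: "smooth_on_domS S h D" and hpos: "\<And>r. 0 < r \<Longrightarrow> ereal r < S \<Longrightarrow> h r > 0"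
    using model unfolding model_data_def by blast
  have "continuous_on (domS S) (D 0)"
    using sm unfolding smooth_on_domS_def
    by (meson DERIV_continuous continuous_on_eq_continuous_within)
  then have "continuous_on (domS S) h"
    using sm unfolding smooth_on_domS_def by (metis (no_types, lifting) continuous_on_cong)
  then have hc: "continuous_on U h"
    by (rule continuous_on_subset) (use R0 in \<open>auto simp: U_def domS_def\<close>)
  have Hpos: "H t > 0" if "t \<in> U" for t
    using hpos[of t] that R0 by (auto simp: H_def U_def)
  have Hc: "continuous_on U H" unfolding H_def by (intro continuous_intros hc)
  have fc: "continuous_on U f" using f_cont by (simp add: U_def)
  have IccU: "{R0..b} \<subseteq> U" if "ereal b < S" for b
    using that by (auto simp: U_def) (meson ereal_less_eq(3) order_le_less_trans)
  have c1: "continuous_on {R0..b} (\<lambda>t. H t * f t)" if "ereal b < S" for b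
    by (rule continuous_on_subset[OF _ IccU[OF that]]) (intro continuous_intros Hc fc)
  have c2: "continuous_on {R0..b} (\<lambda>t. 1 / H t)" if "ereal b < S" for b
  proof (rule continuous_on_subset[OF _ IccU[OF that]])
    show "continuous_on U (\<lambda>t. 1 / H t)"
      by (rule continuous_on_divide) (use Hpos in \<open>auto intro: continuous_intros Hc simp: less_le\<close>)
  qed
  have Fc: "continuous_on {R0..b} F" if "ereal b < S" for b
    unfolding F_def by (rule indefinite_integral_continuous_1) (rule integrable_continuous_real[OF c1[OF that]])
  have Vc: "continuous_on {R0..b} V" if "ereal b < S" for b
    unfolding V_def by (rule indefinite_integral_continuous_1) (rule integrable_continuous_real[OF c2[OF that]])
  have c3: "continuous_on {R0..b} (\<lambda>t. F t / H t)" if "ereal b < S" for b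
  proof -
    have "continuous_on {R0..b} H" using Hc IccU[OF that] continuous_on_subset by blast
    moreover have "\<forall>t\<in>{R0..b}. H t \<noteq> 0" using Hpos IccU[OF that] by (metis less_irrefl subsetD)
    ultimately show ?thesis using Fc[OF that] by (intro continuous_on_divide) auto
  qed

  have Ieq: "I r = F r * V r - J r" if "R0 \<le> r" "ereal r < S" for r
  proof -
    have int1: "(\<lambda>t. H t * f t) integrable_on {R0..r}" by (rule integrable_continuous_real[OF c1[OF that(2)]])
    have "integral {s..r} (\<lambda>t. (h t / h s) ^ (N - 1) * f t) = F r * (1 / H s) - F s / H s"
      if s: "s \<in> {R0..r}" for s
    proof -
      have "integral {s..r} (\<lambda>t. (h t / h s) ^ (N - 1) * f t) = integral {s..r} (\<lambda>t. H t * f t) / H s"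
        by (simp add: H_def n_def power_divide)
      moreover have "F s + integral {s..r} (\<lambda>t. H t * f t) = F r"
        unfolding F_def using Henstock_Kurzweil_Integration.integral_combine[where f="\<lambda>t. H t * f t" and a=R0 and c=s and b=r] s int1 by auto
      ultimately show ?thesis by (metis (no_types, lifting) add_diff_cancel_left' diff_divide_distrib times_divide_eq_right mult_1_right)
    qed
    then have "I r = integral {R0..r} (\<lambda>s. F r * (1 / H s) - F s / H s)"
      unfolding I_def by (rule integral_cong)
    also have "\<dots> = F r * V r - J r"
    proof -
      have i2: "(\<lambda>s. 1 / H s) integrable_on {R0..r}" by (rule integrable_continuous_real[OF c2[OF that(2)]])
      have i3: "(\<lambda>s. F s / H s) integrable_on {R0..r}" by (rule integrable_continuous_real[OF c3[OF that(2)]])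
      have i1: "(\<lambda>s. F r * (1 / H s)) integrable_on {R0..r}" using integrable_on_cmult_left[OF i2] by simp
      have "integral {R0..r} (\<lambda>s. F r * (1 / H s) - F s / H s)
          = integral {R0..r} (\<lambda>s. F r * (1 / H s)) - integral {R0..r} (\<lambda>s. F s / H s)"
        by (rule Henstock_Kurzweil_Integration.integral_diff[OF i1 i3])
      also have "integral {R0..r} (\<lambda>s. F r * (1 / H s)) = F r * V r"
        unfolding V_def by (rule Henstock_Kurzweil_Integration.integral_mult_right)
      finally show ?thesis by (simp add: J_def)
    qed
    finally show ?thesis .
  qed
  have Vpos: "V x > 0" if "R0 < x" "ereal x < S" for x
  proof -
    have "V R0 < V x"
    proof (rule DERIV_pos_imp_increasing_open[OF that(1) _ Vc[OF that(2)]])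
      fix y assume y: "R0 < y" "y < x"
      have "(V has_real_derivative 1 / H y) (at y)"
        unfolding V_def by (rule deriv_int[OF c2[OF that(2)] y])
      moreover have "1 / H y > 0" using Hpos[of y] y IccU[OF that(2)] by (metis atLeastAtMost_iff less_le subsetD zero_less_divide_1_iff)
      ultimately show "\<exists>z. (V has_real_derivative z) (at y) \<and> z > 0" by blast
    qed
    then show ?thesis by (simp add: V_def)
  qed
  define g where "g r = (\<phi> r - (F r * V r - J r)) / V r + F r" for r
  have gmono: "g a \<le> g b" if "R0 < a" "a \<le> b" "ereal b < S" for a b
  proof (rule DERIV_nonneg_imp_nondecreasing[OF that(2)])
    fix x assume x: "a \<le> x" "x \<le> b"
    have xR: "R0 < x" using x that by auto
    have xS: "ereal x < S" using x that by (meson ereal_less_eq(3) order_le_less_trans)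
    obtain c where c: "x < ereal c" "ereal c < S" using ereal_dense2[OF xS] by blast
    have xc: "x < c" using c by simp
    have dF: "(F has_real_derivative H x * f x) (at x)"
      unfolding F_def by (rule deriv_int[OF c1[OF c(2)] xR xc])
    have dV: "(V has_real_derivative 1 / H x) (at x)"
      unfolding V_def by (rule deriv_int[OF c2[OF c(2)] xR xc])
    have dJ: "(J has_real_derivative F x / H x) (at x)"
      unfolding J_def by (rule deriv_int[OF c3[OF c(2)] xR xc])
    have Hx: "H x > 0" using Hpos[of x] xR xS by (auto simp: U_def)
    have Vx: "V x > 0" using Vpos xR xS by auto
    define E where "E = ((\<phi>' x - (H x * f x * V x + F x * (1 / H x) - F x / H x)) * V x
        - (\<phi> x - (F x * V x - J x)) * (1 / H x)) / (V x * V x) + H x * f x"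
    have "(g has_real_derivative E) (at x)"
      unfolding g_def[abs_def] E_def
      by (rule derivative_eq_intros dF dV dJ \<phi>_deriv[OF xR xS] refl | use Vx in simp)+
    moreover have "E \<ge> 0"
    proof -
      have "u x = (\<phi> x - (F x * V x - J x)) / (H x * V x)"
        using Ieq[of x] xR xS by (simp add: u_def model_w_def I_def H_def V_def n_def)
      moreover have "\<phi>' x - u x \<ge> 0" using sub[OF xR xS] by (simp add: u_def)
      ultimately have "\<phi>' x - (\<phi> x - (F x * V x - J x)) / (H x * V x) \<ge> 0" by simp
      moreover have "E = (\<phi>' x - (\<phi> x - (F x * V x - J x)) / (H x * V x)) / V x"
        unfolding E_def using Hx Vx by (simp add: field_simps)
      ultimately show ?thesis using Vx by simp
    qed
    ultimately show "\<exists>y. (g has_real_derivative y) (at x) \<and> 0 \<le> y" by blast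
  qed
  have gu: "g x = H x * u x + F x" if "R0 < x" "ereal x < S" for x
  proof -
    have Hx: "H x > 0" using Hpos[of x] that by (auto simp: U_def)
    have Vx: "V x > 0" using Vpos that by auto
    have "u x = (\<phi> x - (F x * V x - J x)) / (H x * V x)"
      using Ieq[of x] that by (simp add: u_def model_w_def I_def H_def V_def n_def)
    then show ?thesis using Hx Vx by (simp add: g_def field_simps)
  qed
  show ?thesis
  proof (intro allI impI)
    fix r0 r
    assume r0: "R0 < r0 \<and> ereal r0 < S \<and> model_w N h f R0 r0 (\<phi> r0) - \<kappa> r0 = 0"
      and r: "R0 < r \<and> r \<le> r0"
    show "model_w N h f R0 r (\<phi> r) - \<kappa> r \<le> 0"
    proof (cases "r = r0")
      case True then show ?thesis using r0 by simp
    next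
      case False
      then have rr: "r < r0" using r by simp
      have rS: "ereal r < S" using r r0 by (meson ereal_less_eq(3) order_le_less_trans)
      have "g r \<le> g r0" using gmono[of r r0] r r0 by auto
      then have A: "H r * u r + F r \<le> H r0 * u r0 + F r0" using gu[of r] gu[of r0] r r0 rS by auto
      have "F r + integral {r..r0} (\<lambda>t. H t * f t) = F r0"
        unfolding F_def using Henstock_Kurzweil_Integration.integral_combine[where f="\<lambda>t. H t * f t" and a=R0 and c=r and b=r0] r rr integrable_continuous_real[OF c1[of r0]] r0 by auto
      moreover have "H r0 * \<kappa> r0 - H r * \<kappa> r + integral {r..r0} (\<lambda>t. H t * f t) \<le> 0"
        using flux[of r r0] r rr r0 by (simp add: H_def n_def)
      moreover have "u r0 = \<kappa> r0" using r0 by (simp add: u_def)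
      ultimately have "H r * (u r - \<kappa> r) \<le> 0" using A by (simp add: algebra_simps)
      moreover have "H r > 0" using Hpos[of r] r rS by (auto simp: U_def)
      ultimately have "u r - \<kappa> r \<le> 0" by (simp add: mult_le_0_iff)
      then show ?thesis by (simp add: u_def)
    qed
  qed
qed

end
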